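(* Let $K$ be a CMI on $X_1,\dots,X_n$ in pure form. Then $K\sim\mathrm{can}(K)$.
   Context: Setting: $X_1,\dots,X_n$ jointly distributed discrete random variables with $H(X_i)<\infty$; distribution unspecified. $X_\alpha=(X_i,i\in\alpha)$, $X_\emptyset$ constant. A CMI is $K=(C,\langle Q_1,\dots,Q_k\rangle)$, $k\ge0$, $C\subseteq\{1,\dots,n\}$, $\langle\cdot\rangle$ an unordered multiset of subsets; it is valid (for a given distribution) if $\sum_{i=1}^kH(X_{Q_i}|X_C)-H(X_{Q_1},\dots,X_{Q_k}|X_C)=0$. Empty members may be deleted. $K\sim K'$: for every joint distribution both valid or both invalid. Degenerate CMIs (always valid) are written $(\cdot,\langle\ \rangle)$. $K$ is in pure form if all $Q_i\ne\emptyset$ and $Q_i\cap C=\emptyset$. Canonical form of pure $K$: $\mathbb I_K$ = set of indices lying in at least two members (distinct positions) of the collection if $k\ge2$, $\emptyset$ otherwise; $P_1,\dots,P_t$ the nonempty sets among $Q_i\setminus\mathbb I_K$ (with multiplicity); $\mathrm{can}(K)=(\cdot,\langle\ \rangle)$ if $k\le1$; $(C,\langle\mathbb I_K,\mathbb I_K\rangle)$ if $k\ge2,\mathbb I_K\ne\emptyset,t\le1$; $(C,\langle P_1,\dots,P_t\rangle)$ if $k\ge2,\mathbb I_K=\emptyset$; $(C,\langle\mathbb I_K,\mathbb I_K,P_1,\dots,P_t\rangle)$ if $k\ge2,\mathbb I_K\ne\emptyset,t\ge2$. *)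

theory Defs
  imports "HOL-Probability.Probability_Mass_Function" "HOL-Library.Multiset" "HOL-Analysis.Infinite_Sum"
begin

text \<open>A joint distribution of X_1,...,X_n: a pmf on outcomes \<omega> :: nat \<Rightarrow> nat,
  X_i(\<omega>) = \<omega> i (values relabelled injectively into nat, which preserves entropies).\<close>

type_synonym jdist = "(nat \<Rightarrow> nat) pmf"

definition marg :: "jdist \<Rightarrow> nat set \<Rightarrow> (nat \<Rightarrow> nat) pmf" where
  "marg p \<alpha> = map_pmf (\<lambda>\<omega> i. if i \<in> \<alpha> then \<omega> i else 0) p"

definition ent_summable :: "'a pmf \<Rightarrow> bool" where
  "ent_summable q \<longleftrightarrow> (\<lambda>y. pmf q y * ln (pmf q y)) summable_on UNIV"

definition ent :: "'a pmf \<Rightarrow> real" where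
  "ent q = (\<Sum>\<^sub>\<infinity>y. - (pmf q y * ln (pmf q y)))"

definition H :: "jdist \<Rightarrow> nat set \<Rightarrow> real" where
  "H p \<alpha> = ent (marg p \<alpha>)"

definition Hc :: "jdist \<Rightarrow> nat set \<Rightarrow> nat set \<Rightarrow> real" where
  "Hc p A C = H p (A \<union> C) - H p C"

definition admissible :: "nat \<Rightarrow> jdist \<Rightarrow> bool" where
  "admissible n p \<longleftrightarrow> (\<forall>i\<in>{1..n}. ent_summable (marg p {i}))"

type_synonym cmi = "nat set \<times> nat set multiset"

definition valid :: "jdist \<Rightarrow> cmi \<Rightarrow> bool" where
  "valid p K \<longleftrightarrow> (case K of (C, Qs) \<Rightarrow>
      (\<Sum>Q\<in>#Qs. Hc p Q C) - Hc p (\<Union>(set_mset Qs)) C = 0)"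

definition cmi_equiv :: "nat \<Rightarrow> cmi \<Rightarrow> cmi \<Rightarrow> bool" where
  "cmi_equiv n K K' \<longleftrightarrow> (\<forall>p. admissible n p \<longrightarrow> (valid p K \<longleftrightarrow> valid p K'))"

definition pure_form :: "nat \<Rightarrow> cmi \<Rightarrow> bool" where
  "pure_form n K \<longleftrightarrow> (case K of (C, Qs) \<Rightarrow> C \<subseteq> {1..n} \<and>
      (\<forall>Q\<in>#Qs. Q \<subseteq> {1..n} \<and> Q \<noteq> {} \<and> Q \<inter> C = {}))"

definition II :: "cmi \<Rightarrow> nat set" where
  "II K = (if size (snd K) \<ge> 2
           then {i. size (filter_mset (\<lambda>Q. i \<in> Q) (snd K)) \<ge> 2} else {})"

definition Ps :: "cmi \<Rightarrow> nat set multiset" where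
  "Ps K = filter_mset (\<lambda>P. P \<noteq> {}) (image_mset (\<lambda>Q. Q - II K) (snd K))"

text \<open>The degenerate CMI (\<cdot>, <>) is represented with the empty collection.\<close>
definition degenerate :: cmi where "degenerate = ({}, {#})"

definition can :: "cmi \<Rightarrow> cmi" where
  "can K = (let C = fst K; k = size (snd K); I = II K; P = Ps K; t = size P in
     if k \<le> 1 then degenerate
     else if I \<noteq> {} \<and> t \<le> 1 then (C, {#I, I#})
     else if I = {} then (C, P)
     else (C, {#I, I#} + P))"

end

theory Submission
  imports Defs "HOL-Probability.Probability"
begin
definition Hn :: "'a pmf \<Rightarrow> ennreal" where
  "Hn q = (\<integral>\<^sup>+ y. ennreal (- ln (pmf q y)) \<partial>measure_pmf q)"

lemma neg_ln_pmf_nonneg: "0 \<le> - ln (pmf q y)"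
  by (cases "pmf q y = 0") (auto simp: ln_le_zero_iff pmf_le_1)
lemma pln_nonpos: "pmf q y * ln (pmf q y) \<le> 0"
  using neg_ln_pmf_nonneg[of q y] by (intro mult_nonneg_nonpos) auto
lemma Hn_count: "Hn q = (\<integral>\<^sup>+ y. ennreal (- (pmf q y * ln (pmf q y))) \<partial>count_space UNIV)"
  unfolding Hn_def nn_integral_measure_pmf
  by (intro nn_integral_cong) (simp add: ennreal_mult'[symmetric] neg_ln_pmf_nonneg)
lemma ent_summable_iff: "ent_summable q \<longleftrightarrow> Hn q \<noteq> \<infinity>"
proof -
  let ?g = "\<lambda>y. pmf q y * ln (pmf q y)"
  have nrm: "norm (?g y) = - ?g y" for y
    using pln_nonpos[of q y] by simp
  have 1: "ent_summable q \<longleftrightarrow> (\<lambda>x. norm (?g x)) summable_on UNIV"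
    unfolding ent_summable_def by (rule summable_on_iff_abs_summable_on_real)
  have 2: "(\<lambda>x. norm (?g x)) summable_on UNIV \<longleftrightarrow> Infinite_Set_Sum.abs_summable_on ?g UNIV"
    by (rule abs_summable_equivalent)
  have 3: "Infinite_Set_Sum.abs_summable_on ?g UNIV \<longleftrightarrow> integrable (count_space UNIV) ?g"
    by (rule Infinite_Set_Sum.abs_summable_on_def)
  have 4: "integrable (count_space UNIV) ?g \<longleftrightarrow> (\<integral>\<^sup>+ x. ennreal (norm (?g x)) \<partial>count_space UNIV) < \<infinity>"
    by (simp add: integrable_iff_bounded)
  have 5: "(\<integral>\<^sup>+ x. ennreal (norm (?g x)) \<partial>count_space UNIV) = Hn q"
    unfolding Hn_count nrm ..
  show ?thesis using 1 2 3 4 5 by (simp add: top.not_eq_extremum)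
qed

lemma ent_Hn: assumes "Hn q \<noteq> \<infinity>" shows "ent q = enn2real (Hn q)"
proof -
  let ?f = "\<lambda>y. - (pmf q y * ln (pmf q y))"
  have nn: "0 \<le> ?f y" for y using pln_nonpos[of q y] by linarith
  have nrm: "norm (?f y) = ?f y" for y using nn[of y] by simp
  have fin: "(\<integral>\<^sup>+ y. ennreal (?f y) \<partial>count_space UNIV) \<noteq> \<infinity>"
    using assms unfolding Hn_count .
  have "integrable (count_space UNIV) ?f"
  proof (rule integrableI_bounded)
    show "(\<integral>\<^sup>+ x. ennreal (norm (?f x)) \<partial>count_space UNIV) < \<infinity>"
      unfolding nrm using fin by (simp add: top.not_eq_extremum)
  qed simp
  hence as: "Infinite_Set_Sum.abs_summable_on ?f UNIV" by (simp add: Infinite_Set_Sum.abs_summable_on_def)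
  have "ent q = infsetsum ?f UNIV" unfolding ent_def using infsetsum_infsum[OF as] by simp
  also have "\<dots> = enn2real (\<integral>\<^sup>+ y. ennreal (?f y) \<partial>count_space UNIV)"
    by (rule infsetsum_conv_nn_integral) (use fin nn in auto)
  also have "\<dots> = enn2real (Hn q)" unfolding Hn_count ..
  finally show ?thesis .
qed

lemma pmf_le_map: "pmf q y \<le> pmf (map_pmf \<phi> q) (\<phi> y)"
proof -
  have "pmf q y = measure (measure_pmf q) {y}" by (simp add: measure_pmf_single)
  also have "\<dots> \<le> measure (measure_pmf q) (\<phi> -` {\<phi> y})"
    by (rule measure_pmf.finite_measure_mono) auto
  also have "\<dots> = pmf (map_pmf \<phi> q) (\<phi> y)" by (simp add: pmf_map)
  finally show ?thesis .
qed

lemma Hn_map_le: "Hn (map_pmf \<phi> q) \<le> Hn q"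
proof -
  have "Hn (map_pmf \<phi> q) = (\<integral>\<^sup>+ y. ennreal (- ln (pmf (map_pmf \<phi> q) (\<phi> y))) \<partial>measure_pmf q)"
    unfolding Hn_def by simp
  also have "\<dots> \<le> Hn q" unfolding Hn_def
  proof (intro nn_integral_mono_AE, unfold AE_measure_pmf_iff, intro ballI ennreal_leI)
    fix y assume "y \<in> set_pmf q"
    hence p: "0 < pmf q y" by (simp add: pmf_positive)
    have "ln (pmf q y) \<le> ln (pmf (map_pmf \<phi> q) (\<phi> y))"
      using p pmf_le_map[of q y \<phi>] by (subst ln_le_cancel_iff) auto
    thus "- ln (pmf (map_pmf \<phi> q) (\<phi> y)) \<le> - ln (pmf q y)" by simp
  qed
  finally show ?thesis .
qed

lemma gibbs_pw:
  fixes a b :: real assumes "0 < a" "0 < b"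
  shows "a * (- ln a) + a \<le> a * (- ln b) + b"
proof -
  have "ln (b / a) \<le> b / a - 1" using assms by (intro ln_le_minus_one) auto
  hence "a * ln (b / a) \<le> a * (b / a - 1)" using assms by (intro mult_left_mono) auto
  also have "a * (b / a - 1) = b - a" using assms by (simp add: field_simps)
  finally show ?thesis using assms by (simp add: ln_div algebra_simps)
qed

lemma pmf_total: "(\<integral>\<^sup>+ y. ennreal (pmf q y) \<partial>count_space UNIV) = 1"
  by (simp add: nn_integral_pmf measure_pmf.emeasure_space_1[simplified])

lemma gibbs:
  assumes pos: "\<And>y. y \<in> set_pmf q \<Longrightarrow> 0 < r y \<and> r y \<le> 1"
  and sm: "(\<integral>\<^sup>+ y. indicator (set_pmf q) y * ennreal (r y) \<partial>count_space UNIV) \<le> 1"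
  shows "Hn q \<le> (\<integral>\<^sup>+ y. ennreal (- ln (r y)) \<partial>measure_pmf q)"
proof -
  let ?CE = "\<integral>\<^sup>+ y. ennreal (- ln (r y)) \<partial>measure_pmf q"
  have pw: "ennreal (pmf q y) * ennreal (- ln (pmf q y)) + ennreal (pmf q y)
      \<le> ennreal (pmf q y) * ennreal (- ln (r y)) + indicator (set_pmf q) y * ennreal (r y)" for y
  proof (cases "y \<in> set_pmf q")
    case False thus ?thesis by (simp add: set_pmf_iff)
  next
    case True
    have a: "0 < pmf q y" using True by (simp add: pmf_positive)
    have b: "0 < r y" "r y \<le> 1" using pos[OF True] by auto
    have nb: "0 \<le> - ln (r y)" using b by simp
    have "ennreal (pmf q y) * ennreal (- ln (pmf q y)) + ennreal (pmf q y)
        = ennreal (pmf q y * (- ln (pmf q y)) + pmf q y)"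
    proof -
      have n1: "0 \<le> pmf q y * (- ln (pmf q y))" using pln_nonpos[of q y] by simp
      show ?thesis
        using a neg_ln_pmf_nonneg[of q y] n1
        by (simp only: ennreal_mult[symmetric] ennreal_plus[symmetric] less_imp_le)
    qed
    also have "\<dots> \<le> ennreal (pmf q y * (- ln (r y)) + r y)"
      by (rule ennreal_leI) (rule gibbs_pw[OF a b(1)])
    also have "\<dots> = ennreal (pmf q y) * ennreal (- ln (r y)) + indicator (set_pmf q) y * ennreal (r y)"
    proof -
      have n1: "0 \<le> pmf q y * (- ln (r y))" using a nb by (intro mult_nonneg_nonneg) auto
      show ?thesis
        using a b nb n1 True
        by (simp only: ennreal_mult[symmetric] ennreal_plus[symmetric] less_imp_le indicator_simps mult_1)
    qed
    finally show ?thesis .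
  qed
  have "Hn q + 1 = (\<integral>\<^sup>+ y. ennreal (pmf q y) * ennreal (- ln (pmf q y)) + ennreal (pmf q y) \<partial>count_space UNIV)"
    unfolding Hn_def nn_integral_measure_pmf pmf_total[of q, symmetric]
    by (subst nn_integral_add) auto
  also have "\<dots> \<le> (\<integral>\<^sup>+ y. ennreal (pmf q y) * ennreal (- ln (r y)) + indicator (set_pmf q) y * ennreal (r y) \<partial>count_space UNIV)"
    by (intro nn_integral_mono pw)
  also have "\<dots> = ?CE + (\<integral>\<^sup>+ y. indicator (set_pmf q) y * ennreal (r y) \<partial>count_space UNIV)"
    unfolding nn_integral_measure_pmf by (subst nn_integral_add) auto
  also have "\<dots> \<le> ?CE + 1" using sm by (intro add_left_mono)
  finally have "1 + Hn q \<le> 1 + ?CE" by (simp add: add.commute)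
  thus ?thesis by (simp add: ennreal_add_left_cancel_le)
qed

lemma nn_group:
  "(\<integral>\<^sup>+ y. F y \<partial>count_space UNIV)
   = (\<integral>\<^sup>+ a. \<integral>\<^sup>+ y. (if \<alpha> y = a then F y else 0) \<partial>count_space UNIV \<partial>count_space UNIV)"
proof -
  let ?G = "\<lambda>(a, y). if \<alpha> y = a then F y else 0"
  have "(\<integral>\<^sup>+ a. \<integral>\<^sup>+ y. (if \<alpha> y = a then F y else 0) \<partial>count_space UNIV \<partial>count_space UNIV)
     = (\<integral>\<^sup>+ a. \<integral>\<^sup>+ y. ?G (a, y) \<partial>count_space UNIV \<partial>count_space UNIV)" by simp
  also have "\<dots> = integral\<^sup>N (count_space UNIV) ?G" by (rule nn_integral_fst_count_space)
  also have "\<dots> = (\<integral>\<^sup>+ y. \<integral>\<^sup>+ a. ?G (a, y) \<partial>count_space UNIV \<partial>count_space UNIV)"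
    by (rule nn_integral_snd_count_space[symmetric])
  also have "\<dots> = (\<integral>\<^sup>+ y. F y \<partial>count_space UNIV)"
  proof (rule nn_integral_cong)
    fix y
    have "(\<integral>\<^sup>+ a. ?G (a, y) \<partial>count_space UNIV) = (\<integral>\<^sup>+ a. F y * indicator {\<alpha> y} a \<partial>count_space UNIV)"
      by (rule nn_integral_cong) (auto split: split_indicator)
    also have "\<dots> = F y" by (simp add: nn_integral_cmult_indicator)
    finally show "(\<integral>\<^sup>+ a. ?G (a, y) \<partial>count_space UNIV) = F y" .
  qed
  finally show ?thesis ..
qed

lemma nn_count_mono_set:
  assumes "X \<subseteq> Y"
  shows "(\<integral>\<^sup>+ x. f x \<partial>count_space X) \<le> (\<integral>\<^sup>+ x. f x \<partial>count_space Y)"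
proof -
  have "(\<integral>\<^sup>+ x. f x \<partial>count_space X) = (\<integral>\<^sup>+ x. f x * indicator X x \<partial>count_space UNIV)"
    by (simp add: nn_integral_restrict_space[symmetric] restrict_count_space)
  also have "\<dots> \<le> (\<integral>\<^sup>+ x. f x * indicator Y x \<partial>count_space UNIV)"
    using assms by (intro nn_integral_mono) (auto split: split_indicator)
  also have "\<dots> = (\<integral>\<^sup>+ x. f x \<partial>count_space Y)"
    by (simp add: nn_integral_restrict_space[symmetric] restrict_count_space)
  finally show ?thesis .
qed

lemma Hn_map_eq: "Hn (map_pmf \<phi> q) = (\<integral>\<^sup>+ y. ennreal (- ln (pmf (map_pmf \<phi> q) (\<phi> y))) \<partial>measure_pmf q)"
  by (simp add: Hn_def)

lemma Hn_submod:
  fixes q :: "'b pmf" and \<alpha> :: "'b \<Rightarrow> 'c" and \<beta> :: "'b \<Rightarrow> 'd" and \<delta> :: "'c \<Rightarrow> 'e" and \<epsilon> :: "'d \<Rightarrow> 'e"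
  assumes comm: "\<And>y. \<delta> (\<alpha> y) = \<epsilon> (\<beta> y)"
  and inj: "inj_on (\<lambda>y. (\<alpha> y, \<beta> y)) (set_pmf q)"
  shows "Hn q + Hn (map_pmf (\<lambda>y. \<delta> (\<alpha> y)) q) \<le> Hn (map_pmf \<alpha> q) + Hn (map_pmf \<beta> q)"
proof -
  define qa where "qa = map_pmf \<alpha> q"
  define qb where "qb = map_pmf \<beta> q"
  define qd where "qd = map_pmf (\<lambda>y. \<delta> (\<alpha> y)) q"
  have qd_a: "qd = map_pmf \<delta> qa" unfolding qd_def qa_def by (simp add: map_pmf_comp)
  have qd_b: "qd = map_pmf \<epsilon> qb" unfolding qd_def qb_def by (simp add: map_pmf_comp comm)
  define \<rho> where "\<rho> y = pmf qa (\<alpha> y) * pmf qb (\<beta> y) / pmf qd (\<delta> (\<alpha> y))" for y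
  have pa: "0 < pmf qa (\<alpha> y)" and pb: "0 < pmf qb (\<beta> y)" and pd: "0 < pmf qd (\<delta> (\<alpha> y))"
     and pbd: "pmf qb (\<beta> y) \<le> pmf qd (\<delta> (\<alpha> y))" if "y \<in> set_pmf q" for y
  proof -
    have q0: "0 < pmf q y" using that by (simp add: pmf_positive)
    show a: "0 < pmf qa (\<alpha> y)" using q0 pmf_le_map[of q y \<alpha>] unfolding qa_def by linarith
    show "0 < pmf qb (\<beta> y)" using q0 pmf_le_map[of q y \<beta>] unfolding qb_def by linarith
    show "0 < pmf qd (\<delta> (\<alpha> y))" using a pmf_le_map[of qa "\<alpha> y" \<delta>] unfolding qd_a by linarith
    show "pmf qb (\<beta> y) \<le> pmf qd (\<delta> (\<alpha> y))" using pmf_le_map[of qb "\<beta> y" \<epsilon>] unfolding qd_b comm by simp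
  qed
  have \<rho>pos: "0 < \<rho> y \<and> \<rho> y \<le> 1" if "y \<in> set_pmf q" for y
  proof
    show "0 < \<rho> y" unfolding \<rho>_def using pa[OF that] pb[OF that] pd[OF that] by simp
    have r1: "pmf qb (\<beta> y) / pmf qd (\<delta> (\<alpha> y)) \<le> 1"
      using pd[OF that] pbd[OF that] by simp
    have "\<rho> y = pmf qa (\<alpha> y) * (pmf qb (\<beta> y) / pmf qd (\<delta> (\<alpha> y)))" unfolding \<rho>_def by simp
    also have "\<dots> \<le> pmf qa (\<alpha> y) * 1" using r1 pa[OF that] by (intro mult_left_mono) auto
    also have "\<dots> \<le> 1" by (simp add: pmf_le_1)
    finally show "\<rho> y \<le> 1" .
  qed
  have ident: "ennreal (- ln (pmf qa (\<alpha> y))) + ennreal (- ln (pmf qb (\<beta> y)))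
     = ennreal (- ln (\<rho> y)) + ennreal (- ln (pmf qd (\<delta> (\<alpha> y))))" if "y \<in> set_pmf q" for y
  proof -
    have n1: "0 \<le> - ln (\<rho> y)" using \<rho>pos[OF that] by simp
    have "ln (\<rho> y) = ln (pmf qa (\<alpha> y)) + ln (pmf qb (\<beta> y)) - ln (pmf qd (\<delta> (\<alpha> y)))"
      unfolding \<rho>_def using pa[OF that] pb[OF that] pd[OF that] by (simp add: ln_div ln_mult)
    hence "- ln (pmf qa (\<alpha> y)) + - ln (pmf qb (\<beta> y)) = - ln (\<rho> y) + - ln (pmf qd (\<delta> (\<alpha> y)))"
      by simp
    moreover have "ennreal (- ln (pmf qa (\<alpha> y))) + ennreal (- ln (pmf qb (\<beta> y)))
        = ennreal (- ln (pmf qa (\<alpha> y)) + - ln (pmf qb (\<beta> y)))"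
      by (rule ennreal_plus[symmetric]) (rule neg_ln_pmf_nonneg)+
    moreover have "ennreal (- ln (\<rho> y)) + ennreal (- ln (pmf qd (\<delta> (\<alpha> y))))
        = ennreal (- ln (\<rho> y) + - ln (pmf qd (\<delta> (\<alpha> y))))"
      by (rule ennreal_plus[symmetric]) (rule n1, rule neg_ln_pmf_nonneg)
    ultimately show ?thesis by simp
  qed
  have A: "Hn qa + Hn qb = (\<integral>\<^sup>+ y. ennreal (- ln (\<rho> y)) \<partial>measure_pmf q) + Hn qd"
  proof -
    have "Hn qa + Hn qb = (\<integral>\<^sup>+ y. ennreal (- ln (pmf qa (\<alpha> y))) + ennreal (- ln (pmf qb (\<beta> y))) \<partial>measure_pmf q)"
      unfolding qa_def qb_def Hn_map_eq by (subst nn_integral_add) auto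
    also have "\<dots> = (\<integral>\<^sup>+ y. ennreal (- ln (\<rho> y)) + ennreal (- ln (pmf qd (\<delta> (\<alpha> y)))) \<partial>measure_pmf q)"
      by (intro nn_integral_cong_AE) (simp add: AE_measure_pmf_iff ident)
    also have "\<dots> = (\<integral>\<^sup>+ y. ennreal (- ln (\<rho> y)) \<partial>measure_pmf q) + Hn qd"
      unfolding qd_def Hn_map_eq by (subst nn_integral_add) auto
    finally show ?thesis .
  qed
  have inner: "(\<integral>\<^sup>+ y. (if \<alpha> y = a then indicator (set_pmf q) y * ennreal (\<rho> y) else 0) \<partial>count_space UNIV)
      \<le> ennreal (pmf qa a)" for a
  proof -
    define T where "T = {y \<in> set_pmf q. \<alpha> y = a}"
    define c where "c = pmf qa a / pmf qd (\<delta> a)"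
    have c0: "0 \<le> c" unfolding c_def by simp
    have "(\<integral>\<^sup>+ y. (if \<alpha> y = a then indicator (set_pmf q) y * ennreal (\<rho> y) else 0) \<partial>count_space UNIV)
       = (\<integral>\<^sup>+ y. ennreal c * (ennreal (pmf qb (\<beta> y)) * indicator T y) \<partial>count_space UNIV)"
    proof (rule nn_integral_cong)
      fix y
      show "(if \<alpha> y = a then indicator (set_pmf q) y * ennreal (\<rho> y) else 0)
          = ennreal c * (ennreal (pmf qb (\<beta> y)) * indicator T y)"
      proof (cases "y \<in> T")
        case True
        hence "\<rho> y = c * pmf qb (\<beta> y)" unfolding \<rho>_def c_def T_def by simp
        thus ?thesis using True c0 unfolding T_def by (simp add: ennreal_mult)
      next
        case False thus ?thesis unfolding T_def by (auto split: split_indicator)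
      qed
    qed
    also have "\<dots> = ennreal c * (\<integral>\<^sup>+ y. ennreal (pmf qb (\<beta> y)) * indicator T y \<partial>count_space UNIV)"
      by (rule nn_integral_cmult) simp
    also have "(\<integral>\<^sup>+ y. ennreal (pmf qb (\<beta> y)) * indicator T y \<partial>count_space UNIV)
        = (\<integral>\<^sup>+ y. ennreal (pmf qb (\<beta> y)) \<partial>count_space T)"
      by (simp add: nn_integral_restrict_space[symmetric] restrict_count_space)
    also have "\<dots> = (\<integral>\<^sup>+ b. ennreal (pmf qb b) \<partial>count_space (\<beta> ` T))"
    proof (rule nn_integral_bij_count_space[where f = "\<lambda>b. ennreal (pmf qb b)"])
      have "inj_on \<beta> T"
      proof (rule inj_onI)
        fix y1 y2 assume "y1 \<in> T" "y2 \<in> T" "\<beta> y1 = \<beta> y2"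
        thus "y1 = y2" using inj unfolding T_def inj_on_def by auto
      qed
      thus "bij_betw \<beta> T (\<beta> ` T)" by (rule inj_on_imp_bij_betw)
    qed
    also have "\<dots> \<le> (\<integral>\<^sup>+ b. ennreal (pmf qb b) \<partial>count_space (\<epsilon> -` {\<delta> a}))"
      by (rule nn_count_mono_set) (auto simp: T_def comm[symmetric])
    also have "\<dots> = emeasure (measure_pmf qb) (\<epsilon> -` {\<delta> a})" by (rule nn_integral_pmf)
    also have "\<dots> = ennreal (pmf qd (\<delta> a))"
      by (simp add: qd_b pmf_map measure_pmf.emeasure_eq_measure)
    finally have "(\<integral>\<^sup>+ y. (if \<alpha> y = a then indicator (set_pmf q) y * ennreal (\<rho> y) else 0) \<partial>count_space UNIV)
       \<le> ennreal c * ennreal (pmf qd (\<delta> a))" by (simp add: mult_left_mono)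
    also have "\<dots> = ennreal (c * pmf qd (\<delta> a))" using c0 by (simp add: ennreal_mult)
    also have "\<dots> \<le> ennreal (pmf qa a)"
      unfolding c_def by (intro ennreal_leI) (cases "pmf qd (\<delta> a) = 0", auto)
    finally show ?thesis .
  qed
  have sm: "(\<integral>\<^sup>+ y. indicator (set_pmf q) y * ennreal (\<rho> y) \<partial>count_space UNIV) \<le> 1"
  proof -
    have "(\<integral>\<^sup>+ y. indicator (set_pmf q) y * ennreal (\<rho> y) \<partial>count_space UNIV)
       = (\<integral>\<^sup>+ a. \<integral>\<^sup>+ y. (if \<alpha> y = a then indicator (set_pmf q) y * ennreal (\<rho> y) else 0) \<partial>count_space UNIV \<partial>count_space UNIV)"
      by (rule nn_group)
    also have "\<dots> \<le> (\<integral>\<^sup>+ a. ennreal (pmf qa a) \<partial>count_space UNIV)"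
      by (intro nn_integral_mono inner)
    also have "\<dots> = 1" by (rule pmf_total)
    finally show ?thesis .
  qed
  have B: "Hn q \<le> (\<integral>\<^sup>+ y. ennreal (- ln (\<rho> y)) \<partial>measure_pmf q)"
    by (rule gibbs[OF \<rho>pos sm])
  have "Hn q + Hn qd \<le> (\<integral>\<^sup>+ y. ennreal (- ln (\<rho> y)) \<partial>measure_pmf q) + Hn qd"
    using B by (rule add_right_mono)
  also have "\<dots> = Hn qa + Hn qb" using A by simp
  finally show ?thesis unfolding qa_def qb_def qd_def .
qed

definition restr :: "nat set \<Rightarrow> (nat \<Rightarrow> nat) \<Rightarrow> (nat \<Rightarrow> nat)" where
  "restr A \<omega> = (\<lambda>i. if i \<in> A then \<omega> i else 0)"

lemma marg_restr: "marg p A = map_pmf (restr A) p"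
  unfolding marg_def restr_def ..

lemma restr_restr: "restr A (restr B \<omega>) = restr (A \<inter> B) \<omega>"
  unfolding restr_def by auto

lemma marg_sub: "A \<subseteq> B \<Longrightarrow> marg p A = map_pmf (restr A) (marg p B)"
  unfolding marg_restr map_pmf_comp restr_restr by (simp add: Int_absorb2)

lemma Hn_marg_mono: "A \<subseteq> B \<Longrightarrow> Hn (marg p A) \<le> Hn (marg p B)"
  using Hn_map_le marg_sub by metis

lemma Hn_marg_empty: "Hn (marg p {}) = 0"
proof -
  have "marg p {} = return_pmf (\<lambda>i. 0)" unfolding marg_def by (simp add: map_pmf_const)
  thus ?thesis by (simp add: Hn_def)
qed

lemma Hn_marg_submod:
  "Hn (marg p (A \<union> B)) + Hn (marg p (A \<inter> B)) \<le> Hn (marg p A) + Hn (marg p B)"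
proof -
  let ?q = "marg p (A \<union> B)"
  have inj: "inj_on (\<lambda>y. (restr A y, restr B y)) (set_pmf ?q)"
  proof (rule inj_onI)
    fix u v assume u: "u \<in> set_pmf ?q" and v: "v \<in> set_pmf ?q"
      and e: "(restr A u, restr B u) = (restr A v, restr B v)"
    obtain u' where u': "u = restr (A \<union> B) u'" using u unfolding marg_restr by auto
    obtain v' where v': "v = restr (A \<union> B) v'" using v unfolding marg_restr by auto
    show "u = v"
    proof
      fix i
      show "u i = v i"
      proof (cases "i \<in> A")
        case True thus ?thesis using fun_cong[OF conjunct1[OF e[unfolded prod.inject]], of i]
          by (simp add: restr_def)
      next
        case F: False
        show ?thesis
        proof (cases "i \<in> B")
          case True thus ?thesis using fun_cong[OF conjunct2[OF e[unfolded prod.inject]], of i]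
            by (simp add: restr_def)
        next
          case False thus ?thesis using F u' v' by (simp add: restr_def)
        qed
      qed
    qed
  qed
  have "Hn ?q + Hn (map_pmf (\<lambda>y. restr (A \<inter> B) (restr A y)) ?q)
      \<le> Hn (map_pmf (restr A) ?q) + Hn (map_pmf (restr B) ?q)"
    by (rule Hn_submod[where \<epsilon>="restr (A \<inter> B)", OF _ inj]) (simp add: restr_restr Int_commute Int_left_commute Int_assoc)
  moreover have "map_pmf (\<lambda>y. restr (A \<inter> B) (restr A y)) ?q = marg p (A \<inter> B)"
  proof -
    have "A \<inter> B \<inter> A = A \<inter> B" by auto
    thus ?thesis by (subst marg_sub[of "A \<inter> B" "A \<union> B"]) (auto simp: restr_restr)
  qed
  moreover have "map_pmf (restr A) ?q = marg p A" by (rule marg_sub[symmetric]) auto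
  moreover have "map_pmf (restr B) ?q = marg p B" by (rule marg_sub[symmetric]) auto
  ultimately show ?thesis by simp
qed

lemma Hn_marg_fin:
  assumes adm: "admissible n p" and A: "A \<subseteq> {1..n}"
  shows "Hn (marg p A) \<noteq> \<infinity>"
proof -
  have "finite A" using A finite_subset by blast
  thus ?thesis using A
  proof (induction A rule: finite_induct)
    case empty thus ?case by (simp add: Hn_marg_empty)
  next
    case (insert i A)
    have i: "Hn (marg p {i}) \<noteq> \<infinity>"
      using adm insert.prems unfolding admissible_def by (simp add: ent_summable_iff)
    have IH: "Hn (marg p A) \<noteq> \<infinity>" using insert by auto
    have "Hn (marg p (insert i A)) \<le> Hn (marg p ({i} \<union> A)) + Hn (marg p ({i} \<inter> A))" by simp
    also have "\<dots> \<le> Hn (marg p {i}) + Hn (marg p A)" by (rule Hn_marg_submod)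
    finally show ?case using i IH by (auto simp: top_unique ennreal_add_eq_top)
  qed
qed

definition Vs :: "nat \<Rightarrow> nat set set" where "Vs n = Pow {1..n}"

lemma H_eq: "admissible n p \<Longrightarrow> A \<subseteq> {1..n} \<Longrightarrow> H p A = enn2real (Hn (marg p A))"
  unfolding H_def using ent_Hn Hn_marg_fin by blast

lemma H_empty: "H p {} = 0"
  unfolding H_def using ent_Hn[of "marg p {}"] by (simp add: Hn_marg_empty)

lemma H_mono: "admissible n p \<Longrightarrow> A \<subseteq> B \<Longrightarrow> B \<subseteq> {1..n} \<Longrightarrow> H p A \<le> H p B"
  using H_eq[of n p A] H_eq[of n p B] Hn_marg_fin[of n p B] Hn_marg_mono[of A B p]
  by (simp add: enn2real_mono top.not_eq_extremum)

lemma H_submod: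
  assumes "admissible n p" "A \<subseteq> {1..n}" "B \<subseteq> {1..n}"
  shows "H p (A \<union> B) + H p (A \<inter> B) \<le> H p A + H p B"
proof -
  have f: "Hn (marg p X) < \<infinity>" if "X \<subseteq> {1..n}" for X
    using Hn_marg_fin[OF assms(1) that] by (simp add: top.not_eq_extremum)
  have "enn2real (Hn (marg p (A \<union> B)) + Hn (marg p (A \<inter> B)))
      \<le> enn2real (Hn (marg p A) + Hn (marg p B))"
    using Hn_marg_submod[of p A B] f assms by (intro enn2real_mono) auto
  thus ?thesis using f assms
    by (simp add: H_eq[OF assms(1)] enn2real_plus le_infI1)
qed

definition polym :: "nat set \<Rightarrow> (nat set \<Rightarrow> real) \<Rightarrow> bool" where
  "polym V g \<longleftrightarrow> g {} = 0 \<and> (\<forall>A B. A \<subseteq> B \<longrightarrow> B \<subseteq> V \<longrightarrow> g A \<le> g B)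
     \<and> (\<forall>A B. A \<subseteq> V \<longrightarrow> B \<subseteq> V \<longrightarrow> g (A \<union> B) + g (A \<inter> B) \<le> g A + g B)"

lemma polym_Hc:
  assumes adm: "admissible n p" and C: "C \<subseteq> {1..n}"
  shows "polym {1..n} (\<lambda>A. Hc p A C)"
  unfolding polym_def Hc_def
proof (intro conjI allI impI)
  show "H p ({} \<union> C) - H p C = 0" by simp
next
  fix A B assume "A \<subseteq> B" "B \<subseteq> {1..n}"
  thus "H p (A \<union> C) - H p C \<le> H p (B \<union> C) - H p C"
    using H_mono[OF adm, of "A \<union> C" "B \<union> C"] C by auto
next
  fix A B assume AB: "A \<subseteq> {1..n}" "B \<subseteq> {1..n}"
  have e1: "A \<union> B \<union> C = (A \<union> C) \<union> (B \<union> C)" by auto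
  have e2: "A \<inter> B \<union> C = (A \<union> C) \<inter> (B \<union> C)" by auto
  show "H p (A \<union> B \<union> C) - H p C + (H p (A \<inter> B \<union> C) - H p C)
      \<le> H p (A \<union> C) - H p C + (H p (B \<union> C) - H p C)"
    unfolding e1 e2 using H_submod[OF adm, of "A \<union> C" "B \<union> C"] AB C by auto
qed

lemma polym_empty: "polym V g \<Longrightarrow> g {} = 0" unfolding polym_def by blast
lemma polym_mono: "polym V g \<Longrightarrow> A \<subseteq> B \<Longrightarrow> B \<subseteq> V \<Longrightarrow> g A \<le> g B" unfolding polym_def by blast
lemma polym_sub: "polym V g \<Longrightarrow> A \<subseteq> V \<Longrightarrow> B \<subseteq> V \<Longrightarrow> g (A \<union> B) + g (A \<inter> B) \<le> g A + g B"
  unfolding polym_def by blast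
lemma polym_nonneg: "polym V g \<Longrightarrow> A \<subseteq> V \<Longrightarrow> 0 \<le> g A"
  using polym_mono[of V g "{}" A] polym_empty[of V g] by auto
lemma polym_subadd:
  assumes "polym V g" "A \<subseteq> V" "B \<subseteq> V" shows "g (A \<union> B) \<le> g A + g B"
proof -
  have "A \<inter> B \<subseteq> V" using assms(2) by blast
  from polym_sub[OF assms] polym_nonneg[OF assms(1) this] show ?thesis by linarith
qed
lemma polym_zero: 
  assumes "polym V g" "I \<subseteq> V" "g I = 0" "A \<subseteq> V" shows "g (A \<union> I) = g A"
  using polym_subadd[OF assms(1) assms(4) assms(2)] polym_mono[OF assms(1), of A "A \<union> I"] assms by auto

definition Idx :: "nat set multiset \<Rightarrow> nat set" where
  "Idx Qs = {i. 2 \<le> size (filter_mset (\<lambda>Q. i \<in> Q) Qs)}"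

lemma size_filter_pos: "0 < size (filter_mset (\<lambda>Q. i \<in> Q) Qs) \<longleftrightarrow> i \<in> \<Union>(set_mset Qs)"
proof -
  have "0 < size (filter_mset (\<lambda>Q. i \<in> Q) Qs) \<longleftrightarrow> filter_mset (\<lambda>Q. i \<in> Q) Qs \<noteq> {#}"
    by (metis gr0I size_eq_0_iff_empty zero_less_iff_neq_zero)
  also have "\<dots> \<longleftrightarrow> i \<in> \<Union>(set_mset Qs)" by (simp only: filter_mset_eq_mempty_iff) blast
  finally show ?thesis .
qed

lemma Idx_sub: "Idx Qs \<subseteq> \<Union>(set_mset Qs)"
proof
  fix i assume "i \<in> Idx Qs"
  hence "2 \<le> size (filter_mset (\<lambda>Q. i \<in> Q) Qs)" unfolding Idx_def by (rule CollectD)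
  hence "0 < size (filter_mset (\<lambda>Q. i \<in> Q) Qs)" by linarith
  thus "i \<in> \<Union>(set_mset Qs)" by (simp only: size_filter_pos)
qed

lemma Idx_empty: "Idx {#} = {}" unfolding Idx_def by (simp only: filter_empty_mset size_empty) simp
lemma size_filter_add:
  "size (filter_mset (\<lambda>Q. i \<in> Q) (add_mset Q Qs))
   = (if i \<in> Q then Suc (size (filter_mset (\<lambda>Q. i \<in> Q) Qs)) else size (filter_mset (\<lambda>Q. i \<in> Q) Qs))"
  by (simp only: filter_mset_add_mset split: if_split) (simp only: size_add_mset, simp)

lemma Idx_add: "Idx (add_mset Q Qs) = Idx Qs \<union> (Q \<inter> \<Union>(set_mset Qs))"
proof -
  have "i \<in> Idx (add_mset Q Qs) \<longleftrightarrow> i \<in> Idx Qs \<union> (Q \<inter> \<Union>(set_mset Qs))" for i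
  proof (cases "i \<in> Q")
    case True
    have "i \<in> Idx (add_mset Q Qs) \<longleftrightarrow> 2 \<le> Suc (size (filter_mset (\<lambda>Q. i \<in> Q) Qs))"
      unfolding Idx_def mem_Collect_eq size_filter_add using True by (simp only: if_True)
    also have "\<dots> \<longleftrightarrow> i \<in> \<Union>(set_mset Qs)" using size_filter_pos[of i Qs] by linarith
    finally show ?thesis using True Idx_sub[of Qs] by blast
  next
    case False
    have "i \<in> Idx (add_mset Q Qs) \<longleftrightarrow> i \<in> Idx Qs"
      unfolding Idx_def mem_Collect_eq size_filter_add using False by (simp only: if_False)
    thus ?thesis using False by blast
  qed
  thus ?thesis by blast
qed
lemma key_ineq:
  assumes g: "polym V g" and Q: "\<forall>Q\<in>#Qs. Q \<subseteq> V"
  shows "g (\<Union>(set_mset Qs)) + g (Idx Qs) \<le> (\<Sum>Q\<in>#Qs. g Q)"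
  using Q
proof (induction Qs)
  case empty thus ?case using polym_empty[OF g] by (simp add: Idx_empty)
next
  case (add Q Qs)
  let ?U = "\<Union>(set_mset Qs)"
  have QV: "Q \<subseteq> V" and UV: "?U \<subseteq> V" using add.prems by auto
  have IV: "Idx Qs \<subseteq> V" using Idx_sub UV by blast
  have IH: "g ?U + g (Idx Qs) \<le> (\<Sum>Q\<in>#Qs. g Q)" using add by auto
  have s1: "g (Q \<union> ?U) + g (Q \<inter> ?U) \<le> g Q + g ?U" by (rule polym_sub[OF g QV UV])
  have s2: "g (Idx Qs \<union> (Q \<inter> ?U)) \<le> g (Idx Qs) + g (Q \<inter> ?U)"
    by (rule polym_subadd[OF g IV]) (use QV in blast)
  have "\<Union>(set_mset (add_mset Q Qs)) = Q \<union> ?U" by simp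
  thus ?case using IH s1 s2 by (simp add: Idx_add)
qed

lemma sum_filter_zero:
  assumes "\<And>x. \<not> P x \<Longrightarrow> f x = (0::real)"
  shows "(\<Sum>x\<in>#filter_mset P M. f x) = (\<Sum>x\<in>#M. f x)"
proof (induction M)
  case empty show ?case by simp
next
  case (add x M) thus ?case using assms[of x] by (cases "P x") simp_all
qed

definition PsM :: "nat set multiset \<Rightarrow> nat set multiset" where
  "PsM Qs = filter_mset (\<lambda>P. P \<noteq> {}) (image_mset (\<lambda>Q. Q - Idx Qs) Qs)"

definition defect :: "(nat set \<Rightarrow> real) \<Rightarrow> nat set multiset \<Rightarrow> real" where
  "defect g M = (\<Sum>Q\<in>#M. g Q) - g (\<Union>(set_mset M))"

lemma defect_nonneg:
  assumes g: "polym V g" and Q: "\<forall>Q\<in>#Qs. Q \<subseteq> V"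
  shows "0 \<le> defect g Qs"
proof -
  have "Idx Qs \<subseteq> V" using Idx_sub Q by blast
  hence "0 \<le> g (Idx Qs)" by (rule polym_nonneg[OF g])
  thus ?thesis using key_ineq[OF g Q] unfolding defect_def by linarith
qed

lemma PsM_sub: "\<forall>Q\<in>#Qs. Q \<subseteq> V \<Longrightarrow> \<forall>P\<in>#PsM Qs. P \<subseteq> V"
  unfolding PsM_def by (simp only: set_mset_filter set_image_mset) blast

lemma main_equiv:
  assumes g: "polym V g" and Q: "\<forall>Q\<in>#Qs. Q \<subseteq> V"
  shows "defect g Qs = 0 \<longleftrightarrow> g (Idx Qs) = 0 \<and> defect g (PsM Qs) = 0"
proof -
  let ?I = "Idx Qs"
  let ?U = "\<Union>(set_mset Qs)"
  have IU: "?I \<subseteq> ?U" by (rule Idx_sub)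
  have UV: "?U \<subseteq> V" using Q by blast
  have IV: "?I \<subseteq> V" using IU UV by blast
  have red: "defect g Qs = defect g (PsM Qs)" if gI: "g ?I = 0"
  proof -
    have "(\<Sum>Q\<in>#Qs. g Q) = (\<Sum>Q\<in>#Qs. g (Q - ?I))"
    proof (rule arg_cong[where f=sum_mset], rule image_mset_cong)
      fix Q assume "Q \<in># Qs"
      hence QV: "Q \<subseteq> V" using Q by blast
      have a: "Q - ?I \<subseteq> V" "Q - ?I \<subseteq> Q" "Q \<subseteq> (Q - ?I) \<union> ?I" "(Q - ?I) \<union> ?I \<subseteq> V"
        using QV IV by blast+
      have "g (Q - ?I) \<le> g Q" by (rule polym_mono[OF g a(2) QV])
      moreover have "g Q \<le> g ((Q - ?I) \<union> ?I)" by (rule polym_mono[OF g a(3) a(4)])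
      moreover have "g ((Q - ?I) \<union> ?I) = g (Q - ?I)" by (rule polym_zero[OF g IV gI a(1)])
      ultimately show "g Q = g (Q - ?I)" by linarith
    qed
    also have "\<dots> = (\<Sum>P\<in>#image_mset (\<lambda>Q. Q - ?I) Qs. g P)"
      by (simp only: multiset.map_comp comp_def)
    also have "\<dots> = (\<Sum>P\<in>#PsM Qs. g P)"
      unfolding PsM_def by (rule sum_filter_zero[symmetric]) (use polym_empty[OF g] in simp)
    finally have s: "(\<Sum>Q\<in>#Qs. g Q) = (\<Sum>P\<in>#PsM Qs. g P)" .
    have u: "\<Union>(set_mset (PsM Qs)) = ?U - ?I"
      unfolding PsM_def by (simp only: set_mset_filter set_image_mset) blast
    have e: "?U = (?U - ?I) \<union> ?I" using IU by blast
    have "g ?U = g (?U - ?I)"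
      by (subst e, rule polym_zero[OF g IV gI]) (use UV in blast)
    thus ?thesis unfolding defect_def s u by simp
  qed
  show ?thesis
  proof
    assume d: "defect g Qs = 0"
    have "g ?I \<le> 0" using key_ineq[OF g Q] d unfolding defect_def by linarith
    hence gI: "g ?I = 0" using polym_nonneg[OF g IV] by linarith
    thus "g ?I = 0 \<and> defect g (PsM Qs) = 0" using red d by simp
  next
    assume "g ?I = 0 \<and> defect g (PsM Qs) = 0"
    thus "defect g Qs = 0" using red by simp
  qed
qed

lemma size_le1_cases: "size (M::'a multiset) \<le> 1 \<Longrightarrow> M = {#} \<or> (\<exists>x. M = {#x#})"
proof (cases "size M = 0")
  case True thus ?thesis by simp
next
  case False
  assume "size M \<le> 1"
  hence "size M = 1" using False by linarith
  thus ?thesis using size_1_singleton_mset by blast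
qed

lemma defect_small:
  assumes "size M \<le> 1" "g {} = 0" shows "defect g M = 0"
  using size_le1_cases[OF assms(1)] assms(2) unfolding defect_def by (elim disjE exE) simp_all

theorem mainTheorem4:
  fixes n :: nat and K :: cmi
  assumes "pure_form n K"
  shows "cmi_equiv n K (can K)"
proof -
  obtain C Qs where K: "K = (C, Qs)" by (cases K)
  have C: "C \<subseteq> {1..n}" and Q: "\<forall>Q\<in>#Qs. Q \<subseteq> {1..n}"
    using assms unfolding K pure_form_def by auto
  have vd: "valid p (C', M) \<longleftrightarrow> defect (\<lambda>A. Hc p A C') M = 0" for p C' M
    unfolding valid_def defect_def by simp
  have IIK: "II K = (if 2 \<le> size Qs then Idx Qs else {})"
    unfolding II_def K snd_conv Idx_def ..
  have IIeq: "II K = Idx Qs"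
  proof (cases "2 \<le> size Qs")
    case True thus ?thesis unfolding IIK by (rule if_P)
  next
    case False
    have "Idx Qs = {}"
    proof (rule equals0I)
      fix i assume "i \<in> Idx Qs"
      hence "2 \<le> size (filter_mset (\<lambda>Q. i \<in> Q) Qs)" unfolding Idx_def by (rule CollectD)
      moreover have "size (filter_mset (\<lambda>Q. i \<in> Q) Qs) \<le> size Qs" by (rule size_filter_mset_lesseq)
      ultimately show False using False by linarith
    qed
    thus ?thesis unfolding IIK using False by simp
  qed
  have Pseq: "Ps K = PsM Qs" unfolding Ps_def IIeq unfolding K snd_conv PsM_def ..
  show ?thesis unfolding cmi_equiv_def
  proof (intro allI impI)
    fix p assume adm: "admissible n p"
    define g where "g = (\<lambda>A. Hc p A C)"
    have g: "polym {1..n} g" unfolding g_def by (rule polym_Hc[OF adm C])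
    have g0: "g {} = 0" by (rule polym_empty[OF g])
    have vK: "valid p K \<longleftrightarrow> defect g Qs = 0" unfolding K vd g_def ..
    show "valid p K \<longleftrightarrow> valid p (can K)"
    proof (cases "size Qs \<le> 1")
      case True
      have "can K = degenerate" unfolding can_def K using True by simp
      moreover have "valid p degenerate" unfolding degenerate_def vd defect_def Hc_def by simp
      moreover have "valid p K" unfolding vK using defect_small[of Qs g] True g0 by blast
      ultimately show ?thesis by simp
    next
      case False
      let ?I = "Idx Qs" and ?P = "PsM Qs"
      have IV: "?I \<subseteq> {1..n}" using Idx_sub[of Qs] Q by blast
      have PV: "\<forall>P\<in>#?P. P \<subseteq> {1..n}" by (rule PsM_sub[OF Q])
      have UPV: "\<Union>(set_mset ?P) \<subseteq> {1..n}" using PV by blast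
      have main: "valid p K \<longleftrightarrow> g ?I = 0 \<and> defect g ?P = 0"
        unfolding vK by (rule main_equiv[OF g Q])
      have canK: "can K = (if ?I \<noteq> {} \<and> size ?P \<le> 1 then (C, {#?I, ?I#})
          else if ?I = {} then (C, ?P) else (C, {#?I, ?I#} + ?P))"
        unfolding can_def Let_def IIeq Pseq using False by (simp add: K)
      have vc: "valid p (C, M) \<longleftrightarrow> defect g M = 0" for M unfolding vd g_def ..
      show ?thesis
      proof (cases "?I \<noteq> {} \<and> size ?P \<le> 1")
        case True
        have "defect g ?P = 0" using True defect_small g0 by blast
        moreover have "defect g {#?I, ?I#} = g ?I" unfolding defect_def by simp
        ultimately show ?thesis unfolding canK main using True by (simp add: vc)
      next
        case F1: False
        show ?thesis
        proof (cases "?I = {}")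
          case True
          show ?thesis unfolding canK main using True F1 g0 by (simp add: vc)
        next
          case False
          let ?UP = "\<Union>(set_mset ?P)"
          have dP: "0 \<le> defect g ?P" by (rule defect_nonneg[OF g PV])
          have sa: "g (?I \<union> ?UP) \<le> g ?I + g ?UP" by (rule polym_subadd[OF g IV UPV])
          have gIn: "0 \<le> g ?I" by (rule polym_nonneg[OF g IV])
          have z: "g ?I = 0 \<Longrightarrow> g (?I \<union> ?UP) = g ?UP"
            using polym_zero[OF g IV _ UPV] by (simp add: Un_commute)
          have dc: "defect g ({#?I, ?I#} + ?P) = g ?I + g ?I + (\<Sum>Q\<in>#?P. g Q) - g (?I \<union> ?UP)"
            unfolding defect_def by simp
          have "defect g ({#?I, ?I#} + ?P) = 0 \<longleftrightarrow> g ?I = 0 \<and> defect g ?P = 0"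
          proof
            assume "defect g ({#?I, ?I#} + ?P) = 0"
            hence e: "g ?I + (g ?I + g ?UP - g (?I \<union> ?UP)) + defect g ?P = 0"
              unfolding dc defect_def by simp
            hence "g ?I = 0" using dP sa gIn by linarith
            moreover have "defect g ?P = 0" using e dP sa gIn by linarith
            ultimately show "g ?I = 0 \<and> defect g ?P = 0" by simp
          next
            assume a: "g ?I = 0 \<and> defect g ?P = 0"
            thus "defect g ({#?I, ?I#} + ?P) = 0" using z unfolding dc defect_def by simp
          qed
          thus ?thesis unfolding canK main using False F1 by (simp add: vc)
        qed
      qed
    qed
  qed
qed

end
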